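(* Let $K_1\subset\mathbb{R}^n$, $K_2\subset\wedge^2\mathbb{R}^n,\ldots,K_n\subset\wedge^n\mathbb{R}^n$ be proper cones. Then for every $j=2,\ldots,n$, $$\widetilde{T}(K_1,\ldots,K_j)\subseteq\operatorname{int}(T(K_1,\ldots,K_j)).$$
   Context: A proper cone is a closed convex cone that is pointed and solid; $\wedge^j\mathbb{R}^n$ is the $j$th exterior power of $\mathbb{R}^n$. Define recursively $T(K_1)=K_1\cup(-K_1)$, and for $j\ge2$, $T(K_1,\ldots,K_j)$ is the closure of the set of all $x_1\in\mathbb{R}^n$ for which there exist $x_2\in T(K_1),\ldots,x_j\in T(K_1,\ldots,K_{j-1})$ with $x_1\wedge\cdots\wedge x_j\in\operatorname{int}(K_j)\cup\operatorname{int}(-K_j)$. Similarly $\widetilde{T}(K_1)=\operatorname{int}(K_1)\cup(-\operatorname{int}(K_1))$, and for $j\ge2$, $\widetilde{T}(K_1,\ldots,K_j)$ is the set (no closure) of all $x_1\in\mathbb{R}^n$ for which there exist $x_2\in\widetilde{T}(K_1),\ldots,x_j\in\widetilde{T}(K_1,\ldots,K_{j-1})$ with $x_1\wedge\cdots\wedge x_j\in\operatorname{int}(K_j)\cup\operatorname{int}(-K_j)$. *)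

theory Defs
  imports "HOL-Analysis.Analysis"
begin

text \<open>R^n is modelled as real^'n (CARD('n) = n). The exterior power of degree j is
  modelled inside real^('n set) as the linear subspace of vectors supported on the
  j-element subsets of the index type (standard basis e_S, S = {s_1 < ... < s_j}).\<close>

definition ext_space :: "nat \<Rightarrow> (real^('n::finite set)) set" where
  "ext_space j = {w. \<forall>S. card S \<noteq> j \<longrightarrow> w $ S = 0}"

text \<open>Coordinates of x_1 wedge ... wedge x_j: the j x j minors (Leibniz formula).\<close>
definition wedge :: "(real^('n::{finite,linorder})) list \<Rightarrow> real^('n::{finite,linorder} set)" where
  "wedge xs = (\<chi> S. if card S = length xs then
      (\<Sum>p | p permutes {..<length xs}.
         of_int (sign p) * (\<Prod>i<length xs. (xs ! i) $ (sorted_list_of_set S ! p i)))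
    else 0)"

definition ext_int :: "nat \<Rightarrow> (real^('n::finite set)) set \<Rightarrow> (real^('n set)) set" where
  "ext_int j A = (top_of_set (ext_space j)) interior_of A"

definition proper_cone_in :: "'a::euclidean_space set \<Rightarrow> 'a set \<Rightarrow> bool" where
  "proper_cone_in V K \<longleftrightarrow> K \<subseteq> V \<and> closed K \<and> convex K \<and> cone K \<and>
     K \<inter> uminus ` K = {0} \<and> (top_of_set V) interior_of K \<noteq> {}"

text \<open>Levels T(K_1), T(K_1,K_2), ...: T_levels K1 K m is the list of the first m levels;
  level j (1-based) is at position j-1.\<close>
definition T_step :: "(real^('n::{finite,linorder})) set \<Rightarrow> (nat \<Rightarrow> (real^('n::{finite,linorder} set)) set)
    \<Rightarrow> (real^('n::{finite,linorder})) set list \<Rightarrow> (real^('n::{finite,linorder})) set" where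
  "T_step K1 K L = (if L = [] then K1 \<union> uminus ` K1 else
     closure {x. \<exists>xs. length xs = length L \<and> (\<forall>k<length L. xs ! k \<in> L ! k) \<and>
        wedge (x # xs) \<in> ext_int (Suc (length L)) (K (Suc (length L)))
                          \<union> ext_int (Suc (length L)) (uminus ` K (Suc (length L)))})"

primrec T_levels :: "(real^('n::{finite,linorder})) set \<Rightarrow> (nat \<Rightarrow> (real^('n::{finite,linorder} set)) set)
    \<Rightarrow> nat \<Rightarrow> (real^('n::{finite,linorder})) set list" where
  "T_levels K1 K 0 = []"
| "T_levels K1 K (Suc m) = T_levels K1 K m @ [T_step K1 K (T_levels K1 K m)]"

definition Tset :: "(real^('n::{finite,linorder})) set \<Rightarrow> (nat \<Rightarrow> (real^('n::{finite,linorder} set)) set)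
    \<Rightarrow> nat \<Rightarrow> (real^('n::{finite,linorder})) set" where
  "Tset K1 K j = T_levels K1 K j ! (j - 1)"

definition Tt_step :: "(real^('n::{finite,linorder})) set \<Rightarrow> (nat \<Rightarrow> (real^('n::{finite,linorder} set)) set)
    \<Rightarrow> (real^('n::{finite,linorder})) set list \<Rightarrow> (real^('n::{finite,linorder})) set" where
  "Tt_step K1 K L = (if L = [] then interior K1 \<union> uminus ` interior K1 else
     {x. \<exists>xs. length xs = length L \<and> (\<forall>k<length L. xs ! k \<in> L ! k) \<and>
        wedge (x # xs) \<in> ext_int (Suc (length L)) (K (Suc (length L)))
                          \<union> ext_int (Suc (length L)) (uminus ` K (Suc (length L)))})"

primrec Tt_levels :: "(real^('n::{finite,linorder})) set \<Rightarrow> (nat \<Rightarrow> (real^('n::{finite,linorder} set)) set)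
    \<Rightarrow> nat \<Rightarrow> (real^('n::{finite,linorder})) set list" where
  "Tt_levels K1 K 0 = []"
| "Tt_levels K1 K (Suc m) = Tt_levels K1 K m @ [Tt_step K1 K (Tt_levels K1 K m)]"

definition Ttset :: "(real^('n::{finite,linorder})) set \<Rightarrow> (nat \<Rightarrow> (real^('n::{finite,linorder} set)) set)
    \<Rightarrow> nat \<Rightarrow> (real^('n::{finite,linorder})) set" where
  "Ttset K1 K j = Tt_levels K1 K j ! (j - 1)"

end

theory Submission
  imports Defs
begin

lemma len_T: "length (T_levels K1 K m) = m"
  by (induction m) auto

lemma len_Tt: "length (Tt_levels K1 K m) = m"
  by (induction m) auto

lemma T_nth: "k < m \<Longrightarrow> T_levels K1 K m ! k = T_step K1 K (T_levels K1 K k)"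
proof (induction m)
  case 0 then show ?case by simp
next
  case (Suc m)
  then show ?case
    by (cases "k < m") (auto simp: nth_append len_T less_Suc_eq)
qed

lemma Tt_nth: "k < m \<Longrightarrow> Tt_levels K1 K m ! k = Tt_step K1 K (Tt_levels K1 K k)"
proof (induction m)
  case 0 then show ?case by simp
next
  case (Suc m)
  then show ?case
    by (cases "k < m") (auto simp: nth_append len_Tt less_Suc_eq)
qed

lemma sub_levels: "\<forall>k<m. Tt_levels K1 K m ! k \<subseteq> T_levels K1 K m ! k"
proof (induction m)
  case 0 then show ?case by simp
next
  case (Suc m)
  have new: "Tt_step K1 K (Tt_levels K1 K m) \<subseteq> T_step K1 K (T_levels K1 K m)"
  proof (cases "m = 0")
    case True
    then show ?thesis using interior_subset[of K1]
      by (auto simp: Tt_step_def T_step_def)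
  next
    case False
    then have ne1: "Tt_levels K1 K m \<noteq> []" and ne2: "T_levels K1 K m \<noteq> []"
      using len_T len_Tt by (metis list.size(3))+
    show ?thesis
    proof
      fix x assume "x \<in> Tt_step K1 K (Tt_levels K1 K m)"
      then obtain xs where xs: "length xs = m" "\<forall>k<m. xs ! k \<in> Tt_levels K1 K m ! k"
        "wedge (x # xs) \<in> ext_int (Suc m) (K (Suc m)) \<union> ext_int (Suc m) (uminus ` K (Suc m))"
        using ne1 by (auto simp: Tt_step_def len_Tt)
      then have "\<forall>k<m. xs ! k \<in> T_levels K1 K m ! k" using Suc.IH by blast
      then show "x \<in> T_step K1 K (T_levels K1 K m)"
        using ne2 xs by (auto simp: T_step_def len_T intro!: closure_subset[THEN subsetD])
    qed
  qed
  show ?case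
  proof (intro allI impI)
    fix k assume "k < Suc m"
    then show "Tt_levels K1 K (Suc m) ! k \<subseteq> T_levels K1 K (Suc m) ! k"
      using Suc.IH new by (cases "k < m") (auto simp: nth_append len_T len_Tt less_Suc_eq)
  qed
qed

lemma wedge_cont:
  fixes xs :: "(real^('n::{finite,linorder})) list"
  shows "continuous_on UNIV (\<lambda>y. wedge (y # xs))"
proof -
  have c: "continuous_on UNIV (\<lambda>y::real^'n::{finite,linorder}. ((y # xs) ! i) $ c)" for i c
    by (cases i) (auto intro!: continuous_intros)
  show ?thesis
    unfolding wedge_def
  proof (intro continuous_on_vec_lambda)
    fix S :: "'n set"
    show "continuous_on UNIV (\<lambda>x. if card S = length (x # xs) then
      (\<Sum>p | p permutes {..<length (x # xs)}.
         of_int (sign p) * (\<Prod>i<length (x # xs). ((x # xs) ! i) $ (sorted_list_of_set S ! p i)))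
    else 0)"
      by (cases "card S = Suc (length xs)") (auto intro!: continuous_intros c)
  qed
qed

lemma wedge_space: "wedge xs \<in> ext_space (length xs)"
  by (auto simp: wedge_def ext_space_def)

theorem theorem7:
  fixes K1 :: "(real^('n::{finite,linorder})) set"
    and K :: "nat \<Rightarrow> (real^('n set)) set"
  assumes "proper_cone_in UNIV K1"
    and "\<forall>j\<in>{2..CARD('n)}. proper_cone_in (ext_space j) (K j)"
  shows "\<forall>j\<in>{2..CARD('n)}. Ttset K1 K j \<subseteq> interior (Tset K1 K j)"
proof
  fix j assume j: "j \<in> {2..CARD('n)}"
  define m where "m = j - 1"
  have jm: "j = Suc m" "m \<noteq> 0" using j by (auto simp: m_def)
  have Tt: "Ttset K1 K j = Tt_step K1 K (Tt_levels K1 K m)"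
    using jm by (simp add: Ttset_def nth_append len_Tt)
  have T: "Tset K1 K j = T_step K1 K (T_levels K1 K m)"
    using jm by (simp add: Tset_def nth_append len_T)
  have ne1: "Tt_levels K1 K m \<noteq> []" and ne2: "T_levels K1 K m \<noteq> []"
    using len_T len_Tt jm by (metis list.size(3))+
  show "Ttset K1 K j \<subseteq> interior (Tset K1 K j)"
  proof
    fix x assume "x \<in> Ttset K1 K j"
    then obtain xs where xs: "length xs = m" "\<forall>k<m. xs ! k \<in> Tt_levels K1 K m ! k"
      "wedge (x # xs) \<in> ext_int (Suc m) (K (Suc m)) \<union> ext_int (Suc m) (uminus ` K (Suc m))"
      using ne1 Tt by (auto simp: Tt_step_def len_Tt)
    then have xsT: "\<forall>k<m. xs ! k \<in> T_levels K1 K m ! k" using sub_levels by blast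
    define E where "E = ext_int (Suc m) (K (Suc m)) \<union> ext_int (Suc m) (uminus ` K (Suc m))"
    have Eo: "openin (top_of_set (ext_space (Suc m))) E"
      unfolding E_def ext_int_def by (intro openin_Un openin_interior_of)
    have img: "(\<lambda>y. wedge (y # xs)) \<in> UNIV \<rightarrow> ext_space (Suc m)"
      using wedge_space[of "_ # xs"] xs(1) by auto
    have "openin (top_of_set UNIV) (UNIV \<inter> (\<lambda>y. wedge (y # xs)) -` E)"
      using continuous_on_open_gen[OF img] wedge_cont Eo by blast
    then have U: "open {y. wedge (y # xs) \<in> E}"
      by (simp add: vimage_def)
    have sub: "{y. wedge (y # xs) \<in> E} \<subseteq> Tset K1 K j"
    proof
      fix y assume "y \<in> {y. wedge (y # xs) \<in> E}"
      then show "y \<in> Tset K1 K j"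
        using T ne2 xs(1) xsT unfolding E_def
        by (auto simp: T_step_def len_T intro!: closure_subset[THEN subsetD])
    qed
    show "x \<in> interior (Tset K1 K j)"
      using interior_maximal[OF sub U] xs(3) E_def by auto
  qed
qed

end
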